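(* For every $x\in(0,1)$, $\ \Gamma(x,1-x)\ \ge\ e^{-\Gamma'(1)}$.
   Context: For $x>0,y>0$ the Bigamma function is the (convergent) improper integral $\Gamma(x,y):=\int_0^1(-\ln t)^{x-1}\big(-\ln(1-t)\big)^{y-1}\,dt$. $\Gamma'(1)$ is the derivative at $1$ of Euler's gamma function. *)

theory Defs
  imports "HOL-Analysis.Analysis"
begin

text \<open>The integrand is positive on (0,1), so the (convergent) improper integral
  coincides with the Lebesgue integral over the open interval.\<close>
definition Bigamma :: "real \<Rightarrow> real \<Rightarrow> real" where
  "Bigamma x y = (LBINT t:{0<..<1}. (- ln t) powr (x - 1) * (- ln (1 - t)) powr (y - 1))"

end

theory Submission
  imports Defs "HOL-Real_Asymp.Real_Asymp"
begin

lemma refl01: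
  fixes h :: "real \<Rightarrow> real"
  shows "set_integrable lborel {0<..<1} (\<lambda>t. h (1-t)) \<longleftrightarrow> set_integrable lborel {0<..<1} h"
    and "(LBINT t:{0<..<1}. h (1-t)) = (LBINT t:{0<..<1}. h t)"
proof -
  let ?k = "\<lambda>x::real. indicator {0<..<1} x *\<^sub>R h x"
  have e: "?k (1 + (-1) * x) = indicator {0<..<1} x *\<^sub>R h (1 - x)" for x
    by (auto simp: indicator_def)
  show "set_integrable lborel {0<..<1} (\<lambda>t. h (1-t)) \<longleftrightarrow> set_integrable lborel {0<..<1} h"
    unfolding set_integrable_def
    using lborel_integrable_real_affine_iff[of "-1" ?k 1] by (simp only: e)
  show "(LBINT t:{0<..<1}. h (1-t)) = (LBINT t:{0<..<1}. h t)"
    unfolding set_lebesgue_integral_def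
    using lborel_integral_real_affine[of "-1" ?k 1] by (simp only: e) simp
qed

lemma Gamma_set_integral:
  assumes s: "(s::real) > 0"
  shows "set_integrable lborel {0<..} (\<lambda>u. exp(-u) * u powr (s-1))"
    and "(LBINT u:{0<..}. exp(-u) * u powr (s-1)) = Gamma s"
proof -
  let ?f = "\<lambda>u::real. exp(-u) * u powr (s-1)"
  have "((\<lambda>t. t powr (s - 1) / exp t) has_integral Gamma s) {0..}"
    by (rule Gamma_integral_real) fact
  hence "((\<lambda>t. if t \<in> {0<..} then t powr (s - 1) / exp t else 0) has_integral Gamma s) {0..}"
    by (rule has_integral_spike [of "{0}", rotated 2]) auto
  also have "?this = ((\<lambda>t. t powr (s - 1) / exp t) has_integral Gamma s) {0<..}"
    by (subst has_integral_restrict) auto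
  finally have h: "(?f has_integral Gamma s) {0<..}"
    by (simp add: exp_minus field_simps)
  have "?f absolutely_integrable_on {0<..}"
    using h by (intro nonnegative_absolutely_integrable_1) (auto simp: has_integral_integrable)
  hence si: "set_integrable lborel {0<..} ?f"
    unfolding set_integrable_def by (subst (asm) integrable_completion) (auto intro!: borel_measurable_continuous_on_indicator continuous_intros)
  thus "set_integrable lborel {0<..} ?f" .
  show "(LBINT u:{0<..}. ?f u) = Gamma s"
    using set_borel_integral_eq_integral(2)[OF si] h integral_unique by metis
qed


lemma abs_ln_bound:
  fixes u :: real assumes u: "u > 0"
  shows "\<bar>ln u\<bar> \<le> 2 * u powr (1/2 - 1) + u powr (2 - 1)"
proof (cases "u \<ge> 1")
  case True
  then have "\<bar>ln u\<bar> = ln u" by simp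
  also have "\<dots> \<le> u - 1" using ln_le_minus_one u by blast
  finally have "\<bar>ln u\<bar> \<le> u - 1" .
  moreover have "0 \<le> u powr (1/2 - 1)" by simp
  moreover have "u powr (2-1) = u" using u by simp
  ultimately show ?thesis using u by linarith
next
  case False
  then have "\<bar>ln u\<bar> = - ln u" using u by simp
  also have "- ln u = 2 * ln (u powr (-1/2))" using u by (simp add: ln_powr)
  also have "\<dots> \<le> 2 * (u powr (-1/2) - 1)" using ln_le_minus_one[of "u powr (-1/2)"] u by simp
  finally show ?thesis using u by simp
qed

lemma J_int: "set_integrable lborel {0<..} (\<lambda>u::real. exp(-u) * ln u)"
proof (rule set_integrable_bound)
  show "set_integrable lborel {0<..} (\<lambda>u::real. 2 * (exp(-u) * u powr (1/2-1)) + exp(-u) * u powr (2-1))"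
    using Gamma_set_integral(1)[of "1/2"] Gamma_set_integral(1)[of 2] by (intro set_integral_add) auto
  show "set_borel_measurable lborel {0<..} (\<lambda>u::real. exp(-u) * ln u)"
    unfolding set_borel_measurable_def by measurable
  have "norm (exp(-x) * ln x) \<le> norm (2 * (exp(-x) * x powr (1/2-1)) + exp(-x) * x powr (2-1))"
    if x: "x \<in> {0<..}" for x :: real
  proof -
    have "norm (exp(-x) * ln x) = exp(-x) * \<bar>ln x\<bar>" by (simp add: abs_mult)
    also have "\<dots> \<le> exp(-x) * (2 * x powr (1/2 - 1) + x powr (2 - 1))"
      using abs_ln_bound[of x] x by (intro mult_left_mono) auto
    also have "\<dots> \<le> norm (2 * (exp(-x) * x powr (1/2-1)) + exp(-x) * x powr (2-1))"
      by (simp add: algebra_simps)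
    finally show ?thesis .
  qed
  thus "AE (x::real) in lborel. x \<in> {0<..} \<longrightarrow> norm (exp(-x) * ln x) \<le> norm (2 * (exp(-x) * x powr (1/2-1)) + exp(-x) * x powr (2-1))"
    by (intro AE_I2 impI) auto
qed

lemma Gamma_lower:
  assumes s: "(s::real) > 1"
  shows "1 + (s - 1) * (LBINT u:{0<..}. exp(-u) * ln u) \<le> Gamma s"
proof -
  have cg: "\<And>u::real. u \<in> {0<..} \<Longrightarrow> exp(-u) * u powr (1-1) = exp(-u)" by simp
  have i1: "set_integrable lborel {0<..} (\<lambda>u::real. exp(-u))"
  proof -
    have c: "set_integrable lborel {0<..} (\<lambda>u::real. exp(-u) * u powr (1-1)) = set_integrable lborel {0<..} (\<lambda>u::real. exp(-u))"
      by (rule set_integrable_cong) (use cg in auto)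
    show ?thesis using c Gamma_set_integral(1)[OF zero_less_one] by blast
  qed
  have a: "(LBINT u::real:{0<..}. exp(-u) * u powr (1-1)) = (LBINT u:{0<..}. exp(-u))"
  proof (rule set_lebesgue_integral_cong)
    show "{(0::real)<..} \<in> sets lborel" by simp
    show "\<forall>x::real. x \<in> {0<..} \<longrightarrow> exp(-x) * x powr (1-1) = exp(-x)" using cg by blast
  qed
  have b: "(LBINT u::real:{0<..}. exp(-u) * u powr (1-1)) = Gamma (1::real)"
    by (rule Gamma_set_integral(2)) simp
  have e1: "(LBINT u::real:{0<..}. exp(-u)) = (1::real)"
    using a b Gamma_1 by metis
  have "1 + (s - 1) * (LBINT u:{0<..}. exp(-u) * ln u) =
        (LBINT u:{0<..}. exp(-u) + (s-1) * (exp(-u) * ln u))"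
    using i1 J_int by (simp add: set_integral_add e1)
  also have "\<dots> \<le> (LBINT u:{0<..}. exp(-u) * u powr (s-1))"
  proof (rule set_integral_mono)
    show "set_integrable lborel {0<..} (\<lambda>u::real. exp(-u) + (s-1) * (exp(-u) * ln u))"
      using i1 J_int by (intro set_integral_add) auto
    show "set_integrable lborel {0<..} (\<lambda>u::real. exp(-u) * u powr (s-1))"
      using Gamma_set_integral(1)[of s] s by simp
    fix u :: real assume u: "u \<in> {0<..}"
    have "1 + (s-1) * ln u \<le> exp ((s-1) * ln u)" by (rule exp_ge_add_one_self)
    also have "\<dots> = u powr (s-1)" using u by (simp add: powr_def)
    finally have "exp(-u) * (1 + (s-1) * ln u) \<le> exp(-u) * u powr (s-1)"
      by (intro mult_left_mono) auto
    thus "exp(-u) + (s-1) * (exp(-u) * ln u) \<le> exp(-u) * u powr (s-1)"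
      using u by (simp add: algebra_simps)
  qed
  also have "\<dots> = Gamma s" using Gamma_set_integral(2)[of s] s by simp
  finally show ?thesis .
qed

lemma J_le: "(LBINT u:{0<..}. exp(-u) * ln u) \<le> deriv (Gamma :: real \<Rightarrow> real) 1"
proof -
  define J where "J = (LBINT u:{0<..}. exp(-u) * ln (u::real))"
  have nz: "(1::real) \<notin> \<int>\<^sub>\<le>\<^sub>0" by (auto elim!: nonpos_Ints_cases)
  have D: "((Gamma :: real \<Rightarrow> real) has_field_derivative Gamma 1 * Digamma 1) (at 1 within {1<..})"
    using has_field_derivative_Gamma[OF nz] by blast
  have Da: "((Gamma :: real \<Rightarrow> real) has_field_derivative Gamma 1 * Digamma 1) (at 1)"
    using has_field_derivative_Gamma[OF nz] by blast
  have dd: "deriv (Gamma :: real \<Rightarrow> real) 1 = Gamma 1 * Digamma 1"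
    by (rule DERIV_imp_deriv[OF Da])
  have lim: "((\<lambda>y. (Gamma y - Gamma 1) / (y - 1)) \<longlongrightarrow> Gamma 1 * Digamma (1::real)) (at_right 1)"
    using D unfolding has_field_derivative_iff by simp
  have ev: "\<forall>\<^sub>F y in at_right (1::real). J \<le> (Gamma y - Gamma 1) / (y - 1)"
    using eventually_at_right_less[of "1::real"]
  proof (rule eventually_mono)
    fix y :: real assume y: "1 < y"
    have "1 + (y - 1) * J \<le> Gamma y" using Gamma_lower[OF y] unfolding J_def .
    thus "J \<le> (Gamma y - Gamma 1) / (y - 1)" using y by (simp add: field_simps)
  qed
  have "J \<le> Gamma 1 * Digamma (1::real)"
    by (rule tendsto_le[OF _ lim tendsto_const ev]) simp
  thus ?thesis unfolding J_def dd .
qed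

lemma subst_M:
  fixes F :: "real \<Rightarrow> real"
  assumes cont: "\<And>u. u > 0 \<Longrightarrow> isCont F u"
  and int1: "set_integrable lborel {0<..} (\<lambda>u. exp (-u) * F u)"
  and int2: "set_integrable lborel {0<..<1} (\<lambda>t. F (-ln(1-t)))"
  shows "(LBINT t:{0<..<1}. F (-ln(1-t))) = (LBINT u:{0<..}. exp(-u) * F u)"
proof -
  let ?g = "\<lambda>u::real. 1 - exp (-u)"
  let ?f = "\<lambda>t. F (-ln(1-t))"
  have c: "isCont ?f (?g x)" if "0 < x" for x
  proof -
    have "isCont (\<lambda>t. -ln(1-t)) (?g x)"
      by (intro continuous_intros) auto
    moreover have "isCont F (-ln(1 - ?g x))" using cont that by simp
    ultimately show ?thesis using isCont_o2 by blast
  qed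
  have "(LBINT x=ereal 0..ereal 1. ?f x) = (LBINT x=ereal 0..\<infinity>. exp(-x) *\<^sub>R ?f (?g x))"
  proof (rule interval_integral_substitution_integrable)
    show "((ereal \<circ> ?g \<circ> real_of_ereal) \<longlongrightarrow> ereal 0) (at_right (ereal 0))"
      by (simp add: ereal_tendsto_simps) (intro tendsto_eq_intros, auto)
    show "((ereal \<circ> ?g \<circ> real_of_ereal) \<longlongrightarrow> ereal 1) (at_left \<infinity>)"
      by (simp add: ereal_tendsto_simps) real_asymp
  qed (use c int1 int2 in \<open>auto intro!: derivative_eq_intros simp: einterval_iff\<close>)
  then show ?thesis
    by (simp add: interval_integral_Ioo interval_integral_Ioi)
qed

lemma subst_M_nonneg:
  fixes F :: "real \<Rightarrow> real"
  assumes cont: "\<And>u. u > 0 \<Longrightarrow> isCont F u"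
  and nn: "\<And>u. u > 0 \<Longrightarrow> F u \<ge> 0"
  and int1: "set_integrable lborel {0<..} (\<lambda>u. exp (-u) * F u)"
  shows "set_integrable lborel {0<..<1} (\<lambda>t. F (-ln(1-t)))"
proof -
  let ?g = "\<lambda>u::real. 1 - exp (-u)"
  let ?f = "\<lambda>t. F (-ln(1-t))"
  have c: "isCont ?f (?g x)" if "0 < x" for x
  proof -
    have "isCont (\<lambda>t. -ln(1-t)) (?g x)"
      by (intro continuous_intros) auto
    moreover have "isCont F (-ln(1 - ?g x))" using cont that by simp
    ultimately show ?thesis using isCont_o2 by blast
  qed
  have i: "set_integrable lborel (einterval (ereal 0) \<infinity>) (\<lambda>x. ?f (?g x) * exp (-x))"
  proof -
    have "set_integrable lborel {0<..} (\<lambda>x. ?f (?g x) * exp (-x)) = set_integrable lborel {0<..} (\<lambda>u. exp (-u) * F u)"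
      by (rule set_integrable_cong) auto
    thus ?thesis using int1 by simp
  qed
  have "set_integrable lborel (einterval (ereal 0) (ereal 1)) ?f"
  proof (rule interval_integral_substitution_nonneg(1)[of "ereal 0" \<infinity> ?g "\<lambda>x. exp(-x)"])
    show "((ereal \<circ> ?g \<circ> real_of_ereal) \<longlongrightarrow> ereal 0) (at_right (ereal 0))"
      by (simp add: ereal_tendsto_simps) (intro tendsto_eq_intros, auto)
    show "((ereal \<circ> ?g \<circ> real_of_ereal) \<longlongrightarrow> ereal 1) (at_left \<infinity>)"
      by (simp add: ereal_tendsto_simps) real_asymp
  qed (use c i nn in \<open>auto intro!: derivative_eq_intros simp: einterval_iff\<close>)
  thus ?thesis by simp
qed

lemma lnM:
  shows "set_integrable lborel {0<..<1} (\<lambda>t::real. ln(-ln(1-t)))"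
    and "(LBINT t:{0<..<1}. ln(-ln(1-t))) = (LBINT u::real:{0<..}. exp(-u) * ln u)"
proof -
  have ca: "isCont (\<lambda>u. \<bar>ln u\<bar>) u" if "u>0" for u :: real
    using that by (intro continuous_intros) auto
  have "set_integrable lborel {0<..<1} (\<lambda>t::real. \<bar>ln(-ln(1-t))\<bar>)"
    using subst_M_nonneg[of "\<lambda>u. \<bar>ln u\<bar>", OF ca] set_integrable_abs[OF J_int]
    by (auto simp: abs_mult)
  moreover have "set_borel_measurable lborel {0<..<1} (\<lambda>t::real. ln(-ln(1-t)))"
    unfolding set_borel_measurable_def by measurable
  ultimately show i: "set_integrable lborel {0<..<1} (\<lambda>t::real. ln(-ln(1-t)))"
    using set_integrable_abs_iff by blast
  show "(LBINT t:{0<..<1}. ln(-ln(1-t))) = (LBINT u::real:{0<..}. exp(-u) * ln u)"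
    by (rule subst_M[OF _ J_int i]) (auto intro!: continuous_intros)
qed

lemma lnL:
  shows "set_integrable lborel {0<..<1} (\<lambda>t::real. ln(-ln t))"
    and "(LBINT t:{0<..<1}. ln(-ln t)) = (LBINT u::real:{0<..}. exp(-u) * ln u)"
  using refl01[of "\<lambda>t. ln(-ln(1-t))"] lnM by simp_all


lemma const01: "set_integrable lborel {0<..<1::real} (\<lambda>_. c::real)"
  "(LBINT t:{0<..<1::real}. c) = c"
proof -
  have "integrable lborel (\<lambda>t::real. c * indicator {0<..<1} t)"
    by (intro integrable_mult_right integrable_real_indicator) auto
  thus "set_integrable lborel {0<..<1::real} (\<lambda>_. c::real)"
    unfolding set_integrable_def by (simp add: mult.commute)
  show "(LBINT t:{0<..<1::real}. c) = c"
    by (subst set_integral_const) auto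
qed

theorem mainTheorem12:
  fixes x :: real
  assumes "0 < x" and "x < 1"
  shows "Bigamma x (1 - x) \<ge> exp (- deriv (Gamma :: real \<Rightarrow> real) 1)"
proof -
  define c where "c = - deriv (Gamma :: real \<Rightarrow> real) 1"
  define J where "J = (LBINT u::real:{0<..}. exp(-u) * ln u)"
  have Jc: "J \<le> -c" unfolding J_def c_def using J_le by simp
  define h where "h = (\<lambda>t::real. (- ln t) powr (x - 1) * (- ln (1 - t)) powr (1 - x - 1))"
  define l where "l = (\<lambda>t::real. exp c * (1 - c) + (exp c * (x-1)) * ln(-ln t) + (exp c * (-x)) * ln(-ln(1-t)))"
  have bnd: "l t \<le> h t" if t: "t \<in> {0<..<1}" for t
  proof -
    have L: "- ln t > 0" and M: "- ln (1-t) > 0" using t by auto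
    define y where "y = (x-1) * ln(-ln t) + (-x) * ln(-ln(1-t))"
    have "h t = exp y" unfolding h_def y_def using L M by (simp add: powr_def flip: exp_add)
    also have "exp y = exp c * exp (y - c)" by (simp add: exp_diff)
    also have "exp c * (1 + (y - c)) \<le> exp c * exp (y - c)"
      by (intro mult_left_mono exp_ge_add_one_self) auto
    finally have "exp c * (1 + (y - c)) \<le> h t" by simp
    thus ?thesis unfolding l_def y_def by (simp add: algebra_simps)
  qed
  have hi: "set_integrable lborel {0<..<1} h"
  proof (rule set_integrable_bound)
    show "set_integrable lborel {0<..<1} (\<lambda>t::real. t powr ((1-x) - 1) * (1 - t) powr (x - 1))"
      by (rule set_integrable_subset[OF integrable_Beta[of "1-x" x]]) (use assms in auto)
    show "set_borel_measurable lborel {0<..<1} h"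
      unfolding set_borel_measurable_def h_def by measurable
    have "norm (h t) \<le> norm (t powr ((1-x) - 1) * (1 - t) powr (x - 1))" if t: "t \<in> {0<..<1}" for t
    proof -
      have L: "1 - t \<le> - ln t" using ln_le_minus_one[of t] t by auto
      have M: "t \<le> - ln (1-t)" using ln_le_minus_one[of "1-t"] t by auto
      have a: "(- ln t) powr (x - 1) \<le> (1-t) powr (x-1)"
        using t assms L by (intro powr_mono2') auto
      have b: "(- ln (1 - t)) powr (1 - x - 1) \<le> t powr (1 - x - 1)"
        using t assms M by (intro powr_mono2') auto
      have "h t \<le> (1-t) powr (x-1) * t powr (1 - x - 1)"
        unfolding h_def by (intro mult_mono a b) auto
      moreover have "h t \<ge> 0" unfolding h_def by simp
      ultimately show ?thesis by (simp add: mult.commute)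
    qed
    thus "AE t in lborel. t \<in> {0<..<1} \<longrightarrow> norm (h t) \<le> norm (t powr ((1-x) - 1) * (1 - t) powr (x - 1))"
      by (intro AE_I2) auto
  qed
  have li: "set_integrable lborel {0<..<1} l"
    unfolding l_def using const01(1) lnL(1) lnM(1)
    by (intro set_integral_add set_integrable_mult_right) auto
  have "(LBINT t:{0<..<1}. l t) = exp c * (1 - c) + (exp c * (x-1)) * J + (exp c * (-x)) * J"
    unfolding l_def J_def
    using const01 lnL lnM
    by (simp add: set_integral_add set_integrable_mult_right)
  also have "\<dots> = exp c * (1 - c - J)" by (simp add: algebra_simps)
  finally have e: "(LBINT t:{0<..<1}. l t) = exp c * (1 - c - J)" .
  have f: "exp c \<le> exp c * (1 - c - J)" using Jc by simp
  have g: "(LBINT t:{0<..<1}. l t) \<le> (LBINT t:{0<..<1}. h t)"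
    by (rule set_integral_mono[OF li hi bnd])
  show ?thesis
    using e f g unfolding Bigamma_def c_def[symmetric] h_def by linarith
qed

end
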